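(* Let $\mathcal G$ be a finite connected groupoid and $\alpha=(S_g,\alpha_g)_{g\in\mathcal G}$ a unital group-type partial action of $\mathcal G$ on a commutative ring $S=\bigoplus_{y\in\mathcal G_0}S_y$, with $S_g=S1_g$ and $1_g\neq0$ for all $g$. Let $\mathcal H\in\mathrm{wSub}_\alpha(\mathcal G)$, with connected components $\mathcal H_1,\dots,\mathcal H_r$ having object sets $Y_1,\dots,Y_r$, choose $y_j\in Y_j$, and let $T=S^{\alpha_{\mathcal H}}$ and $T_{y_j}=S_{y_j}^{\alpha_{\mathcal H_j(y_j)}}$. The following are equivalent: (i) $T$ is $\alpha$-strong; (ii) for any $g,h\in\mathcal G$ with $t(g)=t(h)$ and $g^{-1}h\notin\mathcal G_T$, and any non-zero idempotent $e\in S_g\cup S_h$, there exists $t\in T$ with $\alpha_g(t1_{g^{-1}})e\neq\alpha_h(t1_{h^{-1}})e$; (iii) $T_{y_j}$ is $\alpha_{\mathcal G(y_j,y_j)}$-strong for all $1\le j\le r$.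
   Context: A groupoid is a small category with all morphisms invertible; $\mathcal G_0$ is its object set (identified with identity morphisms), $s(g),t(g)$ source and target, $\mathcal G(x,y)=\{g:s(g)=x,t(g)=y\}$, $\mathcal G(x)=\mathcal G(x,x)$; $gh$ defined iff $s(g)=t(h)$; connected means all $\mathcal G(x,y)\neq\emptyset$; connected components are full subgroupoids on classes of $x\sim y\iff\mathcal G(x,y)\ne\emptyset$; wide means containing all objects. A partial action $\alpha=(S_g,\alpha_g)_{g\in\mathcal G}$ on a ring $S$: for each $g$, $S_{t(g)}$ is an ideal of $S$, $S_g$ an ideal of $S_{t(g)}$, $\alpha_g:S_{g^{-1}}\to S_g$ a ring isomorphism; $\alpha_x=\mathrm{id}_{S_x}$; for composable $(g,h)$, $\alpha_h^{-1}(S_{g^{-1}}\cap S_h)\subseteq S_{(gh)^{-1}}$ and $\alpha_g\alpha_h(a)=\alpha_{gh}(a)$ there. Unital: $S_g=S1_g$, $1_g$ central idempotent. A partial action of a connected groupoid $\mathcal K$ on $A=\bigoplus_{y\in\mathcal K_0}A_y$ is group-type if there are $x\in\mathcal K_0$ and $\tau_y\in\mathcal K(x,y)$ ($\tau_x=x$) with $A_{\tau_y^{-1}}=A_x$, $A_{\tau_y}=A_y$ for all $y$; for non-connected $\mathcal K$ it is group-type if each restriction to a connected component is group-type. For a subgroupoid $\mathcal H$, $\alpha_{\mathcal H}=(S_h,\alpha_h)_{h\in\mathcal H}$ acts on $\bigoplus_{z\in\mathcal H_0}S_z$; $\mathrm{wSub}_\alpha(\mathcal G)$ is the set of wide subgroupoids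 $\mathcal H$ with $\alpha_{\mathcal H}$ group-type. For a subgroupoid $\mathcal K$ and subring $A\subseteq S$, $A^{\alpha_{\mathcal K}}=\{a\in A:\alpha_k(a1_{k^{-1}})=a1_k\ \forall k\in\mathcal K\}$. For a subring $T\subseteq S$, $\mathcal G_T=\{g\in\mathcal G:\alpha_g(t1_{g^{-1}})=t1_g\ \forall t\in T\}$; for $y\in\mathcal G_0$ and subring $B\subseteq S_y$, $\mathcal G(y)_B=\{l\in\mathcal G(y):\alpha_l(b1_{l^{-1}})=b1_l\ \forall b\in B\}$. For a subring $T\subseteq S$ and $y\in\mathcal G_0$ put $T_y=T1_y$ (for a subring $B\subseteq S_y$, $B1_y=B$). $T_y$ is $\alpha_{\mathcal G(y,z)}$-strong if for any $g,h\in\mathcal G(y,z)$ with $g^{-1}h\notin\mathcal G(y)_{T_y}$ and any non-zero idempotent $e\in S_g\cup S_h$ there is $t_y\in T_y$ with $\alpha_g(t_y1_{g^{-1}})e\neq\alpha_h(t_y1_{h^{-1}})e$. $T$ is $\alpha$-strong if $T_y$ is $\alpha_{\mathcal G(y,z)}$-strong for all $y,z\in\mathcal G_0$. *)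

theory Defs
  imports Main
begin

text \<open>Objects are identified with identity morphisms. The composite
\<open>cmp g h\<close> (i.e. gh) is defined iff \<open>src g = tgt h\<close>.\<close>

record 'g groupoid =
  Mor :: "'g set"
  src :: "'g \<Rightarrow> 'g"
  tgt :: "'g \<Rightarrow> 'g"
  cmp :: "'g \<Rightarrow> 'g \<Rightarrow> 'g"
  ginv :: "'g \<Rightarrow> 'g"

definition is_groupoid :: "'g groupoid \<Rightarrow> bool" where
  "is_groupoid G \<longleftrightarrow>
     (\<forall>g\<in>Mor G. src G g \<in> Mor G \<and> tgt G g \<in> Mor G
        \<and> src G (src G g) = src G g \<and> tgt G (src G g) = src G g
        \<and> src G (tgt G g) = tgt G g \<and> tgt G (tgt G g) = tgt G g
        \<and> cmp G g (src G g) = g \<and> cmp G (tgt G g) g = g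
        \<and> ginv G g \<in> Mor G \<and> src G (ginv G g) = tgt G g \<and> tgt G (ginv G g) = src G g
        \<and> cmp G g (ginv G g) = tgt G g \<and> cmp G (ginv G g) g = src G g)
   \<and> (\<forall>g\<in>Mor G. \<forall>h\<in>Mor G. src G g = tgt G h \<longrightarrow>
        cmp G g h \<in> Mor G \<and> src G (cmp G g h) = src G h \<and> tgt G (cmp G g h) = tgt G g)
   \<and> (\<forall>g\<in>Mor G. \<forall>h\<in>Mor G. \<forall>k\<in>Mor G. src G g = tgt G h \<longrightarrow> src G h = tgt G k \<longrightarrow>
        cmp G (cmp G g h) k = cmp G g (cmp G h k))"

definition objs :: "'g groupoid \<Rightarrow> 'g set \<Rightarrow> 'g set" where
  "objs G K = src G ` K"

definition hom :: "'g groupoid \<Rightarrow> 'g set \<Rightarrow> 'g \<Rightarrow> 'g \<Rightarrow> 'g set" where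
  "hom G K x y = {g\<in>K. src G g = x \<and> tgt G g = y}"

definition connected_groupoid :: "'g groupoid \<Rightarrow> bool" where
  "connected_groupoid G \<longleftrightarrow> (\<forall>x\<in>objs G (Mor G). \<forall>y\<in>objs G (Mor G). hom G (Mor G) x y \<noteq> {})"

definition subgroupoid :: "'g groupoid \<Rightarrow> 'g set \<Rightarrow> bool" where
  "subgroupoid G H \<longleftrightarrow> H \<subseteq> Mor G
     \<and> (\<forall>h\<in>H. src G h \<in> H \<and> tgt G h \<in> H \<and> ginv G h \<in> H)
     \<and> (\<forall>h\<in>H. \<forall>k\<in>H. src G h = tgt G k \<longrightarrow> cmp G h k \<in> H)"

definition wide :: "'g groupoid \<Rightarrow> 'g set \<Rightarrow> bool" where
  "wide G H \<longleftrightarrow> objs G (Mor G) \<subseteq> H"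

definition component_objs :: "'g groupoid \<Rightarrow> 'g set \<Rightarrow> 'g \<Rightarrow> 'g set" where
  "component_objs G K x = {y\<in>objs G K. hom G K x y \<noteq> {}}"

text \<open>The ideal \<open>S e = {a e}\<close> generated by an element; for the unital partial
action \<open>S_g = S 1_g\<close>, with \<open>one g = 1_g\<close>.\<close>
definition Sid :: "'r::comm_ring_1 \<Rightarrow> 'r set" where
  "Sid e = range (\<lambda>a. a * e)"

definition internal_direct_sum :: "'g groupoid \<Rightarrow> ('g \<Rightarrow> 'r::comm_ring_1) \<Rightarrow> bool" where
  "internal_direct_sum G one \<longleftrightarrow>
     (\<forall>a. \<exists>c. (\<forall>y\<in>objs G (Mor G). c y \<in> Sid (one y)) \<and> a = (\<Sum>y\<in>objs G (Mor G). c y))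
   \<and> (\<forall>c. (\<forall>y\<in>objs G (Mor G). c y \<in> Sid (one y)) \<and> (\<Sum>y\<in>objs G (Mor G). c y) = 0
          \<longrightarrow> (\<forall>y\<in>objs G (Mor G). c y = 0))"

text \<open>Unital partial action \<open>(S_g, \<alpha>_g)\<close> of \<open>G\<close> on the commutative ring (the whole type)
\<open>'r\<close>, with \<open>S_g = S 1_g\<close>, \<open>1_g\<close> a (central) idempotent.\<close>
definition unital_partial_action ::
  "'g groupoid \<Rightarrow> ('g \<Rightarrow> 'r::comm_ring_1) \<Rightarrow> ('g \<Rightarrow> 'r \<Rightarrow> 'r) \<Rightarrow> bool" where
  "unital_partial_action G one \<alpha> \<longleftrightarrow>
     (\<forall>g\<in>Mor G. one g * one g = one g \<and> Sid (one g) \<subseteq> Sid (one (tgt G g)))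
   \<and> (\<forall>g\<in>Mor G. bij_betw (\<alpha> g) (Sid (one (ginv G g))) (Sid (one g))
        \<and> (\<forall>a\<in>Sid (one (ginv G g)). \<forall>b\<in>Sid (one (ginv G g)).
              \<alpha> g (a + b) = \<alpha> g a + \<alpha> g b \<and> \<alpha> g (a * b) = \<alpha> g a * \<alpha> g b))
   \<and> (\<forall>x\<in>objs G (Mor G). \<forall>a\<in>Sid (one x). \<alpha> x a = a)
   \<and> (\<forall>g\<in>Mor G. \<forall>h\<in>Mor G. src G g = tgt G h \<longrightarrow>
        (let D = {a\<in>Sid (one (ginv G h)). \<alpha> h a \<in> Sid (one (ginv G g)) \<inter> Sid (one h)} in
          D \<subseteq> Sid (one (ginv G (cmp G g h)))
          \<and> (\<forall>a\<in>D. \<alpha> g (\<alpha> h a) = \<alpha> (cmp G g h) a)))"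

definition group_type :: "'g groupoid \<Rightarrow> ('g \<Rightarrow> 'r::comm_ring_1) \<Rightarrow> 'g set \<Rightarrow> bool" where
  "group_type G one K \<longleftrightarrow>
     (\<forall>z\<in>objs G K. let C = component_objs G K z in
        \<exists>x\<in>C. \<exists>\<tau>. \<tau> x = x \<and> (\<forall>y\<in>C. \<tau> y \<in> hom G K x y
             \<and> Sid (one (ginv G (\<tau> y))) = Sid (one x) \<and> Sid (one (\<tau> y)) = Sid (one y)))"

definition wSub :: "'g groupoid \<Rightarrow> ('g \<Rightarrow> 'r::comm_ring_1) \<Rightarrow> 'g set set" where
  "wSub G one = {H. subgroupoid G H \<and> wide G H \<and> group_type G one H}"

definition fixed :: "'g groupoid \<Rightarrow> ('g \<Rightarrow> 'r::comm_ring_1) \<Rightarrow> ('g \<Rightarrow> 'r \<Rightarrow> 'r)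
     \<Rightarrow> 'g set \<Rightarrow> 'r set \<Rightarrow> 'r set" where
  "fixed G one \<alpha> K A = {a\<in>A. \<forall>k\<in>K. \<alpha> k (a * one (ginv G k)) = a * one k}"

text \<open>\<open>\<G>_T\<close>, and \<open>\<G>(y)_B\<close> (the latter is \<open>stab G one \<alpha> (hom G (Mor G) y y) B\<close>).\<close>
definition stab :: "'g groupoid \<Rightarrow> ('g \<Rightarrow> 'r::comm_ring_1) \<Rightarrow> ('g \<Rightarrow> 'r \<Rightarrow> 'r)
     \<Rightarrow> 'g set \<Rightarrow> 'r set \<Rightarrow> 'g set" where
  "stab G one \<alpha> K T = {g\<in>K. \<forall>t\<in>T. \<alpha> g (t * one (ginv G g)) = t * one g}"

definition restrict_obj :: "('g \<Rightarrow> 'r::comm_ring_1) \<Rightarrow> 'r set \<Rightarrow> 'g \<Rightarrow> 'r set" where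
  "restrict_obj one T y = (\<lambda>t. t * one y) ` T"

definition nz_idem :: "'r::comm_ring_1 \<Rightarrow> bool" where
  "nz_idem e \<longleftrightarrow> e * e = e \<and> e \<noteq> 0"

definition strong_at :: "'g groupoid \<Rightarrow> ('g \<Rightarrow> 'r::comm_ring_1) \<Rightarrow> ('g \<Rightarrow> 'r \<Rightarrow> 'r)
     \<Rightarrow> 'r set \<Rightarrow> 'g \<Rightarrow> 'g \<Rightarrow> bool" where
  "strong_at G one \<alpha> B y z \<longleftrightarrow>
     (\<forall>g\<in>hom G (Mor G) y z. \<forall>h\<in>hom G (Mor G) y z.
        cmp G (ginv G g) h \<notin> stab G one \<alpha> (hom G (Mor G) y y) B \<longrightarrow>
        (\<forall>e. nz_idem e \<and> e \<in> Sid (one g) \<union> Sid (one h) \<longrightarrow>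
           (\<exists>b\<in>B. \<alpha> g (b * one (ginv G g)) * e \<noteq> \<alpha> h (b * one (ginv G h)) * e)))"

definition alpha_strong :: "'g groupoid \<Rightarrow> ('g \<Rightarrow> 'r::comm_ring_1) \<Rightarrow> ('g \<Rightarrow> 'r \<Rightarrow> 'r)
     \<Rightarrow> 'r set \<Rightarrow> bool" where
  "alpha_strong G one \<alpha> T \<longleftrightarrow>
     (\<forall>y\<in>objs G (Mor G). \<forall>z\<in>objs G (Mor G). strong_at G one \<alpha> (restrict_obj one T y) y z)"

end

theory Submission
  imports Defs
begin


locale pa =
  fixes G :: "'g groupoid" and one :: "'g \<Rightarrow> 'r::comm_ring_1" and \<alpha> :: "'g \<Rightarrow> 'r \<Rightarrow> 'r"
  assumes grp: "is_groupoid G" and upa: "unital_partial_action G one \<alpha>"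
begin

abbreviation "M \<equiv> Mor G"
abbreviation "s \<equiv> src G"
abbreviation "tg \<equiv> tgt G"
abbreviation "cp \<equiv> cmp G"
abbreviation "iv \<equiv> ginv G"

lemma g1:
  assumes "g \<in> M"
  shows "s g \<in> M" "tg g \<in> M" "s (s g) = s g" "tg (s g) = s g" "s (tg g) = tg g" "tg (tg g) = tg g"
    "cp g (s g) = g" "cp (tg g) g = g" "iv g \<in> M" "s (iv g) = tg g" "tg (iv g) = s g"
    "cp g (iv g) = tg g" "cp (iv g) g = s g"
  using bspec[OF grp[unfolded is_groupoid_def, THEN conjunct1] assms] by blast+

lemma g2:
  assumes "g \<in> M" "h \<in> M" "s g = tg h"
  shows "cp g h \<in> M" "s (cp g h) = s h" "tg (cp g h) = tg g"
  using grp[unfolded is_groupoid_def, THEN conjunct2, THEN conjunct1] assms by blast+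

lemma assoc:
  assumes "g \<in> M" "h \<in> M" "k \<in> M" "s g = tg h" "s h = tg k"
  shows "cp (cp g h) k = cp g (cp h k)"
  using grp[unfolded is_groupoid_def, THEN conjunct2, THEN conjunct2] assms by blast

lemma iv_iv: assumes "g \<in> M" shows "iv (iv g) = g"
proof -
  let ?a = "iv g" let ?b = "iv ?a"
  have a: "?a \<in> M" "?b \<in> M" using g1 assms by auto
  have "?b = cp ?b (s ?b)" by (rule g1(7)[OF a(2), symmetric])
  also have "s ?b = s g" using g1 a assms by simp
  also have "s g = cp ?a g" using g1 assms by simp
  also have "cp ?b (cp ?a g) = cp (cp ?b ?a) g" using assoc[of ?b ?a g] g1 a assms by simp
  also have "cp ?b ?a = s ?a" using g1(12)[OF a(1)] g1 a assms by simp
  also have "cp (s ?a) g = g" using g1 assms by simp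
  finally show ?thesis .
qed

definition obj where "obj x \<longleftrightarrow> x \<in> M \<and> s x = x"

lemma objs_eq: "objs G M = {x. obj x}"
  unfolding objs_def obj_def using g1 by force

lemma obj_props: assumes "obj x" shows "x \<in> M" "s x = x" "tg x = x" "iv x = x"
proof -
  show x: "x \<in> M" "s x = x" using assms obj_def by auto
  show "tg x = x" using g1(4)[OF x(1)] x by simp
  have "iv x = cp (iv x) (s (iv x))" by (rule g1(7)[OF g1(9)[OF x(1)], symmetric])
  also have "s (iv x) = x" using g1 x \<open>tg x = x\<close> by simp
  also have "cp (iv x) x = x" using g1 x by simp
  finally show "iv x = x" .
qed

lemma obj_s: "g \<in> M \<Longrightarrow> obj (s g)" and obj_t: "g \<in> M \<Longrightarrow> obj (tg g)"
  using g1 obj_def by auto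

lemma iv_cp: assumes "g \<in> M" "h \<in> M" "s g = tg h"
  shows "iv (cp g h) = cp (iv h) (iv g)"
proof -
  let ?p = "cp g h" let ?q = "cp (iv h) (iv g)"
  have p: "?p \<in> M" "s ?p = s h" "tg ?p = tg g" using g2 assms by auto
  have q: "?q \<in> M" "s ?q = tg g" "tg ?q = s h" using g2 g1 assms by auto
  have qp: "cp ?q ?p = s h"
  proof -
    have "cp ?q ?p = cp (iv h) (cp (iv g) ?p)" using assoc[of "iv h" "iv g" ?p] g1 assms p by simp
    also have "cp (iv g) ?p = cp (cp (iv g) g) h" using assoc[of "iv g" g h] g1 assms by simp
    also have "\<dots> = h" using g1 assms by simp
    finally show ?thesis using g1 assms by simp
  qed
  have "iv ?p = cp (tg (iv ?p)) (iv ?p)" by (rule g1(8)[OF g1(9)[OF p(1)], symmetric])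
  also have "tg (iv ?p) = cp ?q ?p" using g1 p qp by simp
  also have "cp (cp ?q ?p) (iv ?p) = cp ?q (cp ?p (iv ?p))" using assoc[of ?q ?p "iv ?p"] g1 p q by simp
  also have "cp ?p (iv ?p) = s ?q" using g1 p q by simp
  also have "cp ?q (s ?q) = ?q" by (rule g1(7)[OF q(1)])
  finally show ?thesis .
qed

lemma Sid_iff: "e * e = e \<Longrightarrow> a \<in> Sid e \<longleftrightarrow> a * e = a"
proof
  assume "e * e = e" "a \<in> Sid e"
  then obtain b where "a = b * e" unfolding Sid_def by auto
  then show "a * e = a" using \<open>e * e = e\<close> by (simp add: mult.assoc)
next
  assume "a * e = a" then show "a \<in> Sid e" unfolding Sid_def by (metis rangeI)
qed

lemma upa_idem: "g \<in> M \<Longrightarrow> one g * one g = one g"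
  using upa unfolding unital_partial_action_def by blast
lemma upa_tgt: "g \<in> M \<Longrightarrow> Sid (one g) \<subseteq> Sid (one (tg g))"
  using upa unfolding unital_partial_action_def by blast
lemma upa_bij: "g \<in> M \<Longrightarrow> bij_betw (\<alpha> g) (Sid (one (iv g))) (Sid (one g))"
  using upa unfolding unital_partial_action_def by blast
lemma upa_hom: "g \<in> M \<Longrightarrow> a \<in> Sid (one (iv g)) \<Longrightarrow> b \<in> Sid (one (iv g)) \<Longrightarrow>
   \<alpha> g (a + b) = \<alpha> g a + \<alpha> g b \<and> \<alpha> g (a * b) = \<alpha> g a * \<alpha> g b"
  using upa unfolding unital_partial_action_def by blast
lemma upa_id: "obj x \<Longrightarrow> a \<in> Sid (one x) \<Longrightarrow> \<alpha> x a = a"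
  using upa objs_eq unfolding unital_partial_action_def by blast
lemma upa_comp: assumes "g \<in> M" "h \<in> M" "s g = tg h" "a \<in> Sid (one (iv h))"
  "\<alpha> h a \<in> Sid (one (iv g))"
  shows "a \<in> Sid (one (iv (cp g h)))" "\<alpha> g (\<alpha> h a) = \<alpha> (cp g h) a"
proof -
  have "\<alpha> h a \<in> Sid (one h)" using upa_bij[OF assms(2)] assms(4) bij_betwE by blast
  then have "a \<in> {a\<in>Sid (one (iv h)). \<alpha> h a \<in> Sid (one (iv g)) \<inter> Sid (one h)}" using assms by blast
  moreover have "let D = {a\<in>Sid (one (iv h)). \<alpha> h a \<in> Sid (one (iv g)) \<inter> Sid (one h)} in
          D \<subseteq> Sid (one (iv (cp g h))) \<and> (\<forall>a\<in>D. \<alpha> g (\<alpha> h a) = \<alpha> (cp g h) a)"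
    using upa assms(1-3) unfolding unital_partial_action_def by blast
  ultimately show "a \<in> Sid (one (iv (cp g h)))" "\<alpha> g (\<alpha> h a) = \<alpha> (cp g h) a"
    unfolding Let_def by blast+
qed

lemma mem1: "g \<in> M \<Longrightarrow> a \<in> Sid (one g) \<longleftrightarrow> a * one g = a"
  using Sid_iff upa_idem by blast

lemma one_tg: assumes "g \<in> M" shows "one g * one (tg g) = one g"
proof -
  have "one g \<in> Sid (one g)" using mem1 upa_idem assms by auto
  then show ?thesis using upa_tgt assms mem1 g1 by blast
qed

end

context pa begin

definition bt where "bt g t = \<alpha> g (t * one (iv g))"

lemma Sid_intro: "x * e \<in> Sid e" unfolding Sid_def by blast

lemma Sid_self: "e \<in> Sid e" using Sid_intro[of 1 e] by simp

lemma idem: "g \<in> M \<Longrightarrow> one g * one g = one g" by (rule upa_idem)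

lemma one_iv_src: "g \<in> M \<Longrightarrow> one (iv g) * one (s g) = one (iv g)"
  using one_tg[of "iv g"] g1 by simp

lemma alpha_in: assumes "g \<in> M" "a * one (iv g) = a" shows "\<alpha> g a * one g = \<alpha> g a"
proof -
  have "a \<in> Sid (one (iv g))" using assms(2) Sid_intro[of a "one (iv g)"] by simp
  then have "\<alpha> g a \<in> Sid (one g)" using upa_bij[OF assms(1)] bij_betwE by blast
  then show ?thesis using mem1[OF assms(1)] by blast
qed

lemma bt_in: assumes "g \<in> M" shows "bt g t * one g = bt g t"
proof -
  have "t * one (iv g) * one (iv g) = t * one (iv g)" using idem[OF g1(9)[OF assms]] by (simp add: mult.assoc)
  then show ?thesis unfolding bt_def using alpha_in[OF assms] by blast
qed

lemma dom_iv: "g \<in> M \<Longrightarrow> a * one (iv g) = a \<longleftrightarrow> a \<in> Sid (one (iv g))"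
  using mem1[of "iv g" a] g1(9)[of g] by simp

lemma bt_mult: assumes "g \<in> M" shows "bt g (a * b) = bt g a * bt g b"
proof -
  let ?e = "one (iv g)"
  have e: "?e * ?e = ?e" using idem[OF g1(9)[OF assms]] .
  have "(a * ?e) * (b * ?e) = a * b * (?e * ?e)" by (simp add: ac_simps)
  then have "a * b * ?e = (a * ?e) * (b * ?e)" using e by simp
  moreover have "\<alpha> g ((a * ?e) * (b * ?e)) = \<alpha> g (a * ?e) * \<alpha> g (b * ?e)"
    using upa_hom[OF assms Sid_intro Sid_intro] by blast
  ultimately show ?thesis unfolding bt_def by simp
qed

lemma bt_add: assumes "g \<in> M" shows "bt g (a + b) = bt g a + bt g b"
proof -
  let ?e = "one (iv g)"
  have e: "?e * ?e = ?e" using idem[OF g1(9)[OF assms]] .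
  have "(a + b) * ?e = (a * ?e) + (b * ?e)" by (simp add: distrib_right)
  moreover have "\<alpha> g ((a * ?e) + (b * ?e)) = \<alpha> g (a * ?e) + \<alpha> g (b * ?e)"
    using upa_hom[OF assms Sid_intro Sid_intro] by blast
  ultimately show ?thesis unfolding bt_def by simp
qed

lemma bt_zero: assumes "g \<in> M" shows "bt g 0 = 0"
  using bt_add[OF assms, of 0 0] by simp

lemma alpha_bt: "g \<in> M \<Longrightarrow> a * one (iv g) = a \<Longrightarrow> \<alpha> g a = bt g a"
  unfolding bt_def by simp

lemma bt_one: assumes "g \<in> M" shows "bt g 1 = one g"
proof -
  let ?e = "one (iv g)"
  have e: "?e * ?e = ?e" using idem[OF g1(9)[OF assms]] .
  have "one g \<in> Sid (one g)" using mem1 idem assms by blast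
  then have "one g \<in> \<alpha> g ` Sid ?e" using bij_betw_imp_surj_on[OF upa_bij[OF assms]] by simp
  then obtain b where b: "b \<in> Sid ?e" "\<alpha> g b = one g" by auto
  have be: "b * ?e = b" using b Sid_iff e by blast
  have "bt g 1 * one g = \<alpha> g ?e * \<alpha> g b" unfolding bt_def using b by simp
  also have "\<dots> = \<alpha> g (?e * b)"
  proof -
    have eS: "?e \<in> Sid ?e" using Sid_intro[of 1 "?e"] by simp
    show ?thesis using upa_hom[OF assms eS b(1)] b(2) by simp
  qed
  also have "?e * b = b" using be by (simp add: mult.commute)
  finally have "bt g 1 * one g = one g" using b by simp
  then show ?thesis using bt_in[OF assms, of 1] by simp
qed

lemma bt_restr: assumes "g \<in> M"
  shows "bt g (t * one (iv g)) = bt g t" "bt g (t * one (s g)) = bt g t"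
proof -
  show "bt g (t * one (iv g)) = bt g t" unfolding bt_def using idem g1 assms by (simp add: mult.assoc)
  have "t * one (s g) * one (iv g) = t * (one (iv g) * one (s g))" by (simp add: ac_simps)
  then have "t * one (s g) * one (iv g) = t * one (iv g)" using one_iv_src[OF assms] by simp
  then show "bt g (t * one (s g)) = bt g t" unfolding bt_def by simp
qed

lemma bt_obj: assumes "obj x" shows "bt x t = t * one x"
proof -
  have x: "x \<in> M" "iv x = x" using obj_props assms by auto
  have "t * one x \<in> Sid (one x)" by (rule Sid_intro)
  then show ?thesis unfolding bt_def using upa_id assms x by simp
qed

lemma bt_inv: assumes "g \<in> M" shows "bt (iv g) (bt g t) = t * one (iv g)"
proof -
  let ?a = "t * one (iv g)"
  have ig: "iv g \<in> M" "iv (iv g) = g" "s (iv g) = tg g" using g1 iv_iv assms by auto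
  have a: "?a \<in> Sid (one (iv g))" by (rule Sid_intro)
  have ag: "\<alpha> g ?a * one g = \<alpha> g ?a" using alpha_in assms a dom_iv by blast
  have "\<alpha> g ?a \<in> Sid (one (iv (iv g)))" using ig ag mem1 assms by simp
  from upa_comp[OF ig(1) assms ig(3) a this]
  have "\<alpha> (iv g) (\<alpha> g ?a) = \<alpha> (cp (iv g) g) ?a" by blast
  also have "cp (iv g) g = s g" using g1 assms by simp
  also have "\<alpha> (s g) ?a = ?a"
  proof -
    have "?a * one (s g) = ?a" using one_iv_src[OF assms] by (simp add: mult.assoc)
    then have "?a \<in> Sid (one (s g))" using Sid_intro[of ?a "one (s g)"] by simp
    then show ?thesis using upa_id[OF obj_s[OF assms]] by blast
  qed
  finally show ?thesis unfolding bt_def[of "iv g"] using ig ag unfolding bt_def by simp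
qed

definition full where "full g \<longleftrightarrow> g \<in> M \<and> one (iv g) = one (s g) \<and> one g = one (tg g)"

lemma full_obj: "obj x \<Longrightarrow> full x"
  unfolding full_def using obj_props by auto

lemma full_iv: "full g \<Longrightarrow> full (iv g)"
  unfolding full_def using g1 iv_iv by auto

lemma bt_comp_rfull: assumes l: "l \<in> M" and m: "full m" and lm: "s l = tg m"
  shows "bt (cp l m) t = bt l (bt m t)"
proof -
  have mM: "m \<in> M" and m1: "one (iv m) = one (s m)" and m2: "one m = one (tg m)"
    using m full_def by auto
  have im: "iv m \<in> M" "iv (iv m) = m" "s (iv m) = tg m" "tg (iv m) = s m" using g1 iv_iv mM by auto
  have c: "cp l m \<in> M" "s (cp l m) = s m" "tg (cp l m) = tg l" using g2 l mM lm by auto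
  let ?u = "bt (iv m) (one (iv l))"
  let ?v = "one (iv (cp l m))"
  have u1: "?u * one (iv m) = ?u" using bt_in[OF im(1)] .
  have mu: "bt m ?u = one (iv l)"
    using bt_inv[OF im(1), of "one (iv l)"] im m2 lm one_iv_src[OF l] by simp
  have amu: "\<alpha> m ?u = one (iv l)" using alpha_bt[OF mM u1] mu by simp
  have uS: "?u \<in> Sid (one (iv m))" using u1 dom_iv mM by blast
  have "\<alpha> m ?u \<in> Sid (one (iv l))" using amu mem1 idem g1 l by simp
  from upa_comp[OF l mM lm uS this]
  have A1: "?u * ?v = ?u" and A2: "\<alpha> l (\<alpha> m ?u) = \<alpha> (cp l m) ?u"
    using mem1[OF g1(9)[OF c(1)]] by blast+
  let ?a = "bt m ?v"
  have aS: "?a \<in> Sid (one (iv (iv m)))" using bt_in[OF mM] im mem1 mM by simp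
  have vs: "?v * one (s m) = ?v" using one_iv_src[OF c(1)] c by simp
  have ia: "\<alpha> (iv m) ?a = ?v"
  proof -
    have "\<alpha> (iv m) ?a = bt (iv m) ?a" using alpha_bt[OF im(1)] bt_in[OF mM] im by simp
    also have "\<dots> = ?v * one (iv m)" using bt_inv[OF mM] .
    finally show ?thesis using m1 vs by simp
  qed
  have "\<alpha> (iv m) ?a \<in> Sid (one (iv (cp l m)))" using ia Sid_self by simp
  from upa_comp(1)[OF c(1) im(1) _ aS this] c im
  have "?a \<in> Sid (one (iv (cp (cp l m) (iv m))))" by simp
  moreover have "cp (cp l m) (iv m) = l"
  proof -
    have "cp (cp l m) (iv m) = cp l (cp m (iv m))" using assoc[of l m "iv m"] l mM im lm by simp
    also have "cp m (iv m) = s l" using g1 mM lm by simp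
    finally show ?thesis using g1 l by simp
  qed
  ultimately have aa: "?a * one (iv l) = ?a" using mem1 g1 l by simp
  have "?v = bt (iv m) ?a" using ia alpha_bt[OF im(1)] bt_in[OF mM] im by simp
  also have "\<dots> = bt (iv m) (?a * one (iv l))" using aa by simp
  also have "\<dots> = ?v * ?u" using bt_mult[OF im(1)] ia alpha_bt[OF im(1)] bt_in[OF mM] im by simp
  finally have uv: "?v = ?u" using A1 by (simp add: mult.commute)
  have "t * ?u = (t * ?u) * one (iv m)" using u1 by (simp add: mult.assoc)
  then have tu: "t * ?u \<in> Sid (one (iv m))" using Sid_intro[of "t * ?u" "one (iv m)"] by simp
  have amt: "\<alpha> m (t * ?u) = bt m t * one (iv l)"
    using alpha_bt[OF mM] tu dom_iv mM bt_mult[OF mM] mu by simp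
  have "\<alpha> m (t * ?u) \<in> Sid (one (iv l))" using amt by (simp add: Sid_intro)
  from upa_comp(2)[OF l mM lm tu this]
  have "\<alpha> (cp l m) (t * ?u) = \<alpha> l (bt m t * one (iv l))" using amt by simp
  then show ?thesis unfolding bt_def[of "cp l m"] using uv unfolding bt_def by simp
qed

end

context pa begin

lemma bt_comp_lfull: assumes l: "full l" and m: "m \<in> M" and lm: "s l = tg m"
  shows "bt (cp l m) t = bt l (bt m t)"
proof -
  have lM: "l \<in> M" and l1: "one (iv l) = one (s l)" and l2: "one l = one (tg l)"
    using l full_def by auto
  have il: "iv l \<in> M" "iv (iv l) = l" "s (iv l) = tg l" using g1 iv_iv lM by auto
  have c: "cp l m \<in> M" "s (cp l m) = s m" "tg (cp l m) = tg l" using g2 lM m lm by auto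
  let ?v = "one (iv (cp l m))" let ?w = "one (iv m)"
  have amw: "\<alpha> m ?w = one m" using bt_one[OF m] unfolding bt_def by simp
  have "one m * one (iv l) = one m" using l1 lm one_tg[OF m] by simp
  then have "\<alpha> m ?w \<in> Sid (one (iv l))" using amw Sid_intro[of "one m" "one (iv l)"] by simp
  from upa_comp(1)[OF lM m lm Sid_self this]
  have wv: "?w * ?v = ?w" using mem1[OF g1(9)[OF c(1)]] by blast
  have acv: "\<alpha> (cp l m) ?v = one (cp l m)" using bt_one[OF c(1)] unfolding bt_def by simp
  have "one (cp l m) * one (iv (iv l)) = one (cp l m)" using il l2 c one_tg[OF c(1)] by simp
  then have "\<alpha> (cp l m) ?v \<in> Sid (one (iv (iv l)))" using acv Sid_intro[of "one (cp l m)" "one (iv (iv l))"] by simp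
  from upa_comp(1)[OF il(1) c(1) _ Sid_self this] il c
  have "?v \<in> Sid (one (iv (cp (iv l) (cp l m))))" by simp
  moreover have "cp (iv l) (cp l m) = m"
  proof -
    have "cp (iv l) (cp l m) = cp (cp (iv l) l) m" using assoc[of "iv l" l m] il lM m lm by simp
    also have "cp (iv l) l = tg m" using g1 lM lm by simp
    finally show ?thesis using g1 m by simp
  qed
  ultimately have vw: "?v * ?w = ?v" using mem1[OF g1(9)[OF m]] by simp
  have vweq: "?v = ?w" using vw wv by (simp add: mult.commute)
  have tw: "t * ?w \<in> Sid ?w" by (rule Sid_intro)
  have amt: "\<alpha> m (t * ?w) = bt m t" unfolding bt_def ..
  have "bt m t * one (iv l) = bt m t"
  proof -
    have "bt m t * one (iv l) = bt m t * one m * one (tg m)" using l1 lm bt_in[OF m] by simp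
    also have "\<dots> = bt m t * one m" using one_tg[OF m] by (simp add: mult.assoc)
    finally show ?thesis using bt_in[OF m] by simp
  qed
  then have bS: "\<alpha> m (t * ?w) \<in> Sid (one (iv l))" using amt Sid_intro[of "bt m t" "one (iv l)"] by simp
  from upa_comp(2)[OF lM m lm tw bS]
  have "\<alpha> (cp l m) (t * ?w) = \<alpha> l (bt m t)" using amt by simp
  also have "\<dots> = bt l (bt m t)" using alpha_bt[OF lM] \<open>bt m t * one (iv l) = bt m t\<close> by simp
  finally show ?thesis unfolding bt_def[of "cp l m"] using vweq by simp
qed

lemma one_cp_full: assumes l: "full l" and m: "full m" and lm: "s l = tg m"
  shows "one (cp l m) = one (tg l)"
proof -
  have lM: "l \<in> M" and mM: "m \<in> M" using l m full_def by auto
  have c: "cp l m \<in> M" using g2 lM mM lm by auto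
  have "one (cp l m) = bt (cp l m) 1" using bt_one[OF c] by simp
  also have "\<dots> = bt l (bt m 1)" using bt_comp_rfull[OF lM m lm] .
  also have "bt m 1 = 1 * one (s l)" using bt_one[OF mM] m lm full_def by simp
  also have "bt l (1 * one (s l)) = one l" using bt_restr(2)[OF lM, of 1] bt_one[OF lM] by simp
  finally show ?thesis using l full_def by simp
qed

lemma full_cp: assumes l: "full l" and m: "full m" and lm: "s l = tg m"
  shows "full (cp l m)"
proof -
  have lM: "l \<in> M" and mM: "m \<in> M" using l m full_def by auto
  have c: "cp l m \<in> M" "s (cp l m) = s m" "tg (cp l m) = tg l" using g2 lM mM lm by auto
  have "one (iv (cp l m)) = one (cp (iv m) (iv l))" using iv_cp[OF lM mM lm] by simp
  also have "\<dots> = one (tg (iv m))"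
    using one_cp_full[OF full_iv[OF m] full_iv[OF l]] g1 lM mM lm by simp
  finally show ?thesis unfolding full_def using c one_cp_full[OF l m lm] g1 mM by simp
qed

lemma bt_in_tg: assumes "g \<in> M" shows "bt g t * one (tg g) = bt g t"
proof -
  have "bt g t * one (tg g) = bt g t * one g * one (tg g)" using bt_in[OF assms] by simp
  also have "\<dots> = bt g t * one g" using one_tg[OF assms] by (simp add: mult.assoc)
  finally show ?thesis using bt_in[OF assms] by simp
qed

lemma bt_inv_full: assumes k: "full k" and a: "a * one (tg k) = a"
  shows "bt k (bt (iv k) a) = a"
proof -
  have kM: "k \<in> M" using k full_def by auto
  have "bt (iv (iv k)) (bt (iv k) a) = a * one (iv (iv k))" using bt_inv[OF g1(9)[OF kM]] .
  then show ?thesis using iv_iv[OF kM] k a full_def by simp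
qed

lemma Sid_eq: assumes "e * e = e" "f * f = f" "Sid e = Sid f" shows "e = f"
proof -
  have "e * f = e" using Sid_self[of e] assms Sid_iff by blast
  moreover have "f * e = f" using Sid_self[of f] assms Sid_iff by blast
  ultimately show ?thesis by (simp add: mult.commute)
qed

lemma subgroupoid_M: "subgroupoid G M"
  unfolding subgroupoid_def using g1(1,2,9) g2(1) by blast

lemma sgD: assumes "subgroupoid G K"
  shows "K \<subseteq> M" "\<And>h. h \<in> K \<Longrightarrow> iv h \<in> K" "\<And>h. h \<in> K \<Longrightarrow> s h \<in> K" "\<And>h. h \<in> K \<Longrightarrow> tg h \<in> K"
    "\<And>h k. h \<in> K \<Longrightarrow> k \<in> K \<Longrightarrow> s h = tg k \<Longrightarrow> cp h k \<in> K"
  using assms unfolding subgroupoid_def by blast+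

lemma get_full: assumes gt: "group_type G one K" and sg: "subgroupoid G K" and u: "u \<in> K" "obj u"
  and huv: "hom G K u v \<noteq> {}"
  shows "\<exists>k \<in> hom G K u v. full k"
proof -
  have KM: "K \<subseteq> M" using sgD[OF sg] by blast
  have uo: "u \<in> objs G K" using u obj_props(2)[OF u(2)] unfolding objs_def by (metis image_eqI)
  let ?C = "component_objs G K u"
  have "let C = component_objs G K u in
        \<exists>x\<in>C. \<exists>\<tau>. \<tau> x = x \<and> (\<forall>y\<in>C. \<tau> y \<in> hom G K x y
             \<and> Sid (one (ginv G (\<tau> y))) = Sid (one x) \<and> Sid (one (\<tau> y)) = Sid (one y))"
    using gt uo unfolding group_type_def by (rule bspec)
  then obtain x \<tau> where x: "x \<in> ?C" and tau: "\<forall>y\<in>?C. \<tau> y \<in> hom G K x y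
             \<and> Sid (one (iv (\<tau> y))) = Sid (one x) \<and> Sid (one (\<tau> y)) = Sid (one y)"
    unfolding Let_def by blast
  have "u \<in> hom G K u u" using u obj_props[OF u(2)] unfolding hom_def by simp
  then have uC: "u \<in> ?C" using uo unfolding component_objs_def by blast
  obtain g where g: "g \<in> hom G K u v" using huv by blast
  have gK: "g \<in> K" "s g = u" "tg g = v" using g unfolding hom_def by auto
  have "iv g \<in> K" using sgD(2)[OF sg gK(1)] .
  moreover have "s (iv g) = v" using g1(10)[of g] gK KM by blast
  ultimately have "v \<in> objs G K" unfolding objs_def by (metis image_eqI)
  then have vC: "v \<in> ?C" using huv unfolding component_objs_def by blast
  have CM: "y \<in> M" if yC: "y \<in> ?C" for y
  proof -
    obtain h where "h \<in> K" "y = s h" using yC unfolding component_objs_def objs_def by blast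
    then show ?thesis using KM g1(1)[of h] by blast
  qed
  have xM: "x \<in> M" using CM x .
  have fy: "full (\<tau> y)" if "y \<in> ?C" for y
  proof -
    have yM: "y \<in> M" using CM that .
    have h: "\<tau> y \<in> K" "s (\<tau> y) = x" "tg (\<tau> y) = y" using tau that unfolding hom_def by auto
    have tM: "\<tau> y \<in> M" using h KM by blast
    have "one (iv (\<tau> y)) = one x"
      using Sid_eq[OF idem[OF g1(9)[OF tM]] idem[OF xM]] tau that by blast
    moreover have "one (\<tau> y) = one y"
      using Sid_eq[OF idem[OF tM] idem[OF yM]] tau that by blast
    ultimately show ?thesis unfolding full_def using h tM by simp
  qed
  have hu: "\<tau> u \<in> K" "s (\<tau> u) = x" "tg (\<tau> u) = u" using tau uC unfolding hom_def by auto
  have hv: "\<tau> v \<in> K" "s (\<tau> v) = x" "tg (\<tau> v) = v" using tau vC unfolding hom_def by auto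
  have uM: "\<tau> u \<in> M" and vM: "\<tau> v \<in> M" using hu hv KM by blast+
  let ?k = "cp (\<tau> v) (iv (\<tau> u))"
  have comp: "s (\<tau> v) = tg (iv (\<tau> u))" using hu hv g1(11)[OF uM] by simp
  have kK: "?k \<in> K" using sgD(5)[OF sg hv(1) sgD(2)[OF sg hu(1)] comp] .
  have "s ?k = u" "tg ?k = v" using g2[OF vM g1(9)[OF uM] comp] hv hu g1(10)[OF uM] by auto
  moreover have "full ?k" using full_cp[OF fy[OF vC] full_iv[OF fy[OF uC]] comp] .
  ultimately show ?thesis using kK unfolding hom_def by blast
qed

end

locale pa2 = pa +
  assumes ids: "internal_direct_sum G one" and fin: "finite (Mor G)"
begin

lemma finO: "finite {x. obj x}"
  using fin objs_eq unfolding objs_def by (metis finite_imageI)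

lemma orth: assumes x: "obj x" and y: "obj y" and xy: "x \<noteq> y" shows "one x * one y = 0"
proof -
  let ?p = "one x * one y"
  define c where "c v = (if v = x then ?p else if v = y then - ?p else 0)" for v
  have "\<forall>v\<in>objs G M. c v \<in> Sid (one v)"
  proof
    fix v assume "v \<in> objs G M"
    show "c v \<in> Sid (one v)"
    proof (cases "v = x")
      case True then show ?thesis unfolding c_def using Sid_intro[of "one y" "one x"] by (simp add: mult.commute)
    next
      case False
      then show ?thesis
      proof (cases "v = y")
        case True then show ?thesis unfolding c_def using False Sid_intro[of "- one x" "one y"] by simp
      next
        case False2: False
        then show ?thesis unfolding c_def using False Sid_intro[of 0 "one v"] by simp
      qed
    qed
  qed
  moreover have "(\<Sum>v\<in>objs G M. c v) = 0"
  proof -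
    have "c v = (if v = x then ?p else 0) + (if v = y then - ?p else 0)" for v
      unfolding c_def using xy by auto
    then have "(\<Sum>v\<in>objs G M. c v) = (\<Sum>v\<in>objs G M. (if v = x then ?p else 0)) + (\<Sum>v\<in>objs G M. (if v = y then - ?p else 0))"
      by (simp add: sum.distrib)
    also have "\<dots> = ?p + - ?p" using x y finO objs_eq by simp
    finally show ?thesis by simp
  qed
  ultimately have "\<forall>v\<in>objs G M. c v = 0" using ids unfolding internal_direct_sum_def by blast
  then have "c x = 0" using x objs_eq by blast
  then show ?thesis unfolding c_def by simp
qed

lemma orth_el: assumes "obj v" "obj w" "v \<noteq> w" "a * one v = a" shows "a * one w = 0"
proof -
  have "a * one w = a * (one v * one w)" using assms(4) by (metis mult.assoc)
  then show ?thesis using orth assms by simp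
qed

lemma sum_proj: assumes "C \<subseteq> {x. obj x}" "\<forall>v\<in>C. f v * one v = f v" "obj w"
  shows "(\<Sum>v\<in>C. f v) * one w = (if w \<in> C then f w else 0)"
proof -
  have fC: "finite C" using finO assms(1) finite_subset by blast
  have "(\<Sum>v\<in>C. f v) * one w = (\<Sum>v\<in>C. f v * one w)" by (simp add: sum_distrib_right)
  also have "\<dots> = (\<Sum>v\<in>C. if v = w then f w else 0)"
  proof (rule sum.cong)
    fix v assume v: "v \<in> C"
    show "f v * one w = (if v = w then f w else 0)"
      using orth_el[of v w "f v"] assms v by auto
  qed simp
  also have "\<dots> = (if w \<in> C then f w else 0)" using fC by simp
  finally show ?thesis .
qed

end

context pa2 begin

lemma stab_eq: "g \<in> stab G one \<alpha> K B \<longleftrightarrow> g \<in> K \<and> (\<forall>t\<in>B. bt g t = t * one g)"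
  unfolding stab_def bt_def by simp

lemma fixed_eq: "a \<in> fixed G one \<alpha> K A \<longleftrightarrow> a \<in> A \<and> (\<forall>k\<in>K. bt k a = a * one k)"
  unfolding fixed_def bt_def by simp

lemma strong_at_eq: "strong_at G one \<alpha> B y z \<longleftrightarrow>
     (\<forall>g\<in>hom G M y z. \<forall>h\<in>hom G M y z.
        cp (iv g) h \<notin> stab G one \<alpha> (hom G M y y) B \<longrightarrow>
        (\<forall>e. nz_idem e \<and> e \<in> Sid (one g) \<union> Sid (one h) \<longrightarrow>
           (\<exists>b\<in>B. bt g b * e \<noteq> bt h b * e)))"
  unfolding strong_at_def bt_def by simp

lemma loop_hom: assumes "g \<in> hom G M y z" "h \<in> hom G M y z"
  shows "cp (iv g) h \<in> hom G M y y"
proof -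
  have g: "g \<in> M" "s g = y" "tg g = z" and h: "h \<in> M" "s h = y" "tg h = z" using assms unfolding hom_def by auto
  have "s (iv g) = tg h" using g1(10)[OF g(1)] g h by simp
  then show ?thesis using g2[OF g1(9)[OF g(1)] h(1)] g1(11)[OF g(1)] g h unfolding hom_def by simp
qed

lemma stab_iff: assumes y: "obj y" and l: "l \<in> hom G M y y"
  shows "l \<in> stab G one \<alpha> (hom G M y y) (restrict_obj one T y) \<longleftrightarrow> l \<in> stab G one \<alpha> M T"
proof -
  have lM: "l \<in> M" "s l = y" "tg l = y" using l unfolding hom_def by auto
  have ol0: "one l * one y = one l" using one_tg[OF lM(1)] lM by simp
  have ol: "t * one y * one l = t * one l" for t
  proof -
    have "t * one y * one l = t * (one l * one y)" by (simp add: ac_simps)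
    then show ?thesis using ol0 by simp
  qed
  have r: "bt l (t * one y) = bt l t" for t using bt_restr(2)[OF lM(1)] lM by simp
  show ?thesis
  proof
    assume a: "l \<in> stab G one \<alpha> (hom G M y y) (restrict_obj one T y)"
    have "bt l t = t * one l" if "t \<in> T" for t
    proof -
      have "t * one y \<in> restrict_obj one T y" using that unfolding restrict_obj_def by blast
      then have "bt l (t * one y) = t * one y * one l" using a stab_eq by blast
      then show ?thesis using r ol by simp
    qed
    then show "l \<in> stab G one \<alpha> M T" using stab_eq lM by blast
  next
    assume a: "l \<in> stab G one \<alpha> M T"
    have "bt l b = b * one l" if bT: "b \<in> restrict_obj one T y" for b
    proof -
      obtain t where t: "t \<in> T" "b = t * one y" using bT unfolding restrict_obj_def by blast
      have "bt l t = t * one l" using a t stab_eq by blast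
      then show ?thesis using t r ol by simp
    qed
    then show "l \<in> stab G one \<alpha> (hom G M y y) (restrict_obj one T y)" using stab_eq l by blast
  qed
qed

lemma bt_sum_one: assumes C: "C \<subseteq> {x. obj x}" and g: "g \<in> M"
  shows "bt g (\<Sum>v\<in>C. one v) = (if s g \<in> C then one g else 0)"
proof -
  have "bt g (\<Sum>v\<in>C. one v) = bt g ((\<Sum>v\<in>C. one v) * one (s g))" using bt_restr(2)[OF g] by simp
  also have "(\<Sum>v\<in>C. one v) * one (s g) = (if s g \<in> C then one (s g) else 0)"
    using sum_proj[OF C, of one "s g"] idem C obj_props(1) obj_s[OF g] by blast
  finally show ?thesis using bt_zero[OF g] bt_restr(2)[OF g, of 1] bt_one[OF g] by auto
qed

lemma sum_one_tg: assumes C: "C \<subseteq> {x. obj x}" and g: "g \<in> M"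
  shows "(\<Sum>v\<in>C. one v) * one g = (if tg g \<in> C then one g else 0)"
proof -
  have "one (tg g) * one g = one g" using one_tg[OF g] by (simp add: mult.commute)
  then have "(\<Sum>v\<in>C. one v) * one g = (\<Sum>v\<in>C. one v) * one (tg g) * one g"
    by (simp add: mult.assoc)
  also have "(\<Sum>v\<in>C. one v) * one (tg g) = (if tg g \<in> C then one (tg g) else 0)"
    using sum_proj[OF C, of one "tg g"] idem C obj_props(1) obj_t[OF g] by blast
  finally show ?thesis using one_tg[OF g] by (auto simp: mult.commute)
qed

end


locale setting = pa2 +
  fixes H and Y
  assumes conn: "connected_groupoid G" and gtG: "group_type G one (Mor G)" and HW: "H \<in> wSub G one"
    and Ysub: "Y \<subseteq> objs G H" and Yu: "\<forall>x\<in>objs G H. \<exists>!y. y \<in> Y \<and> y \<in> component_objs G H x"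
begin

definition "T = fixed G one \<alpha> H UNIV"
abbreviation "Ty y \<equiv> restrict_obj one T y"
abbreviation "By y \<equiv> fixed G one \<alpha> (hom G H y y) (Sid (one y))"
abbreviation "CC x \<equiv> component_objs G H x"

lemma sgH: "subgroupoid G H" and wideH: "objs G M \<subseteq> H" and gtH: "group_type G one H"
  using HW unfolding wSub_def wide_def by auto

lemma HM: "H \<subseteq> M" using sgD(1)[OF sgH] .

lemma objH: "obj x \<Longrightarrow> x \<in> H" using wideH objs_eq by blast

lemma objsH: "objs G H = {x. obj x}"
proof
  show "objs G H \<subseteq> {x. obj x}" unfolding objs_def using HM obj_s by blast
  show "{x. obj x} \<subseteq> objs G H"
  proof
    fix x assume "x \<in> {x. obj x}"
    then have "obj x" by simp
    then show "x \<in> objs G H" using objH obj_props(2) unfolding objs_def by (metis image_eqI)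
  qed
qed

lemma T_iff: "t \<in> T \<longleftrightarrow> (\<forall>k\<in>H. bt k t = t * one k)"
  unfolding T_def fixed_eq by simp

lemma one_T: "1 \<in> T" using T_iff bt_one HM by auto

lemma CC_obj: "CC x \<subseteq> {x. obj x}" unfolding component_objs_def using objsH by blast

lemma CC_iff: "obj y \<Longrightarrow> y \<in> CC x \<longleftrightarrow> hom G H x y \<noteq> {}"
  unfolding component_objs_def using objsH by blast

lemma hom_sym: assumes "hom G H u v \<noteq> {}" shows "hom G H v u \<noteq> {}"
proof -
  obtain f where f: "f \<in> H" "s f = u" "tg f = v" using assms unfolding hom_def by blast
  have "iv f \<in> H" using sgD(2)[OF sgH f(1)] .
  moreover have "s (iv f) = v" "tg (iv f) = u" using g1(10,11)[of f] f HM by auto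
  ultimately show ?thesis unfolding hom_def by blast
qed

lemma CC_self: "obj x \<Longrightarrow> x \<in> CC x"
  using CC_iff objH obj_props unfolding hom_def by blast

lemma CC_closed: assumes k: "k \<in> H" and x: "obj x" shows "s k \<in> CC x \<longleftrightarrow> tg k \<in> CC x"
proof -
  have kM: "k \<in> M" using k HM by blast
  have os: "obj (s k)" and ot: "obj (tg k)" using obj_s obj_t kM by auto
  show ?thesis
  proof
    assume "s k \<in> CC x"
    then obtain f where f: "f \<in> H" "s f = x" "tg f = s k" using CC_iff os unfolding hom_def by blast
    have fM: "f \<in> M" using f HM by blast
    have "cp k f \<in> H" using sgD(5)[OF sgH k f(1)] f by simp
    moreover have "s (cp k f) = x" "tg (cp k f) = tg k" using g2[OF kM fM] f by auto
    ultimately show "tg k \<in> CC x" using CC_iff ot unfolding hom_def by blast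
  next
    assume "tg k \<in> CC x"
    then obtain f where f: "f \<in> H" "s f = x" "tg f = tg k" using CC_iff ot unfolding hom_def by blast
    have fM: "f \<in> M" using f HM by blast
    have ik: "iv k \<in> H" "iv k \<in> M" "s (iv k) = tg k" "tg (iv k) = s k"
      using sgD(2)[OF sgH k] g1(9,10,11)[OF kM] by auto
    have "cp (iv k) f \<in> H" using sgD(5)[OF sgH ik(1) f(1)] f ik by simp
    moreover have "s (cp (iv k) f) = x" "tg (cp (iv k) f) = s k" using g2[OF ik(2) fM] f ik by auto
    ultimately show "s k \<in> CC x" using CC_iff os unfolding hom_def by blast
  qed
qed

lemma oneC_T: assumes x: "obj x" shows "(\<Sum>v\<in>CC x. one v) \<in> T"
  unfolding T_iff
proof
  fix k assume k: "k \<in> H"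
  have kM: "k \<in> M" using k HM by blast
  show "bt k (\<Sum>v\<in>CC x. one v) = (\<Sum>v\<in>CC x. one v) * one k"
    using bt_sum_one[OF CC_obj kM] sum_one_tg[OF CC_obj kM] CC_closed[OF k x] by simp
qed

lemma Ty_B: assumes y: "obj y" shows "Ty y \<subseteq> By y"
proof
  fix b assume "b \<in> Ty y"
  then obtain t where t: "t \<in> T" "b = t * one y" unfolding restrict_obj_def by blast
  have "bt k b = b * one k" if k: "k \<in> hom G H y y" for k
  proof -
    have kk: "k \<in> H" "k \<in> M" "s k = y" "tg k = y" using k HM unfolding hom_def by auto
    have "bt k b = bt k t" using t bt_restr(2)[OF kk(2)] kk by simp
    also have "\<dots> = t * one k" using t kk T_iff by blast
    also have "\<dots> = t * (one k * one y)" using one_tg[OF kk(2)] kk by simp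
    finally show ?thesis using t by (simp add: ac_simps)
  qed
  moreover have "b \<in> Sid (one y)" using t Sid_intro by simp
  ultimately show "b \<in> By y" unfolding fixed_eq by blast
qed

lemma ext: assumes y0: "obj y0" and b: "b \<in> By y0" shows "\<exists>t\<in>T. t * one y0 = b"
proof -
  let ?C = "CC y0"
  have y0H: "y0 \<in> H" using objH y0 .
  have y0M: "y0 \<in> M" using obj_props y0 by blast
  have "\<forall>v\<in>?C. \<exists>k. k \<in> hom G H y0 v \<and> full k"
  proof
    fix v assume v: "v \<in> ?C"
    then have "hom G H y0 v \<noteq> {}" unfolding component_objs_def by blast
    then show "\<exists>k. k \<in> hom G H y0 v \<and> full k" using get_full[OF gtH sgH y0H y0] by blast
  qed
  then obtain \<kappa> where ka: "\<forall>v\<in>?C. \<kappa> v \<in> hom G H y0 v \<and> full (\<kappa> v)" by metis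
  have kap: "\<kappa> v \<in> H" "\<kappa> v \<in> M" "s (\<kappa> v) = y0" "tg (\<kappa> v) = v" "full (\<kappa> v)" if "v \<in> ?C" for v
    using ka that HM unfolding hom_def by auto
  have bS: "b * one y0 = b" using b mem1[OF y0M] unfolding fixed_eq by blast
  have bfix: "bt k b = b * one k" if "k \<in> hom G H y0 y0" for k using b that unfolding fixed_eq by blast
  define f where "f v = bt (\<kappa> v) b" for v
  define t where "t = (\<Sum>v\<in>?C. f v)"
  have fv: "\<forall>v\<in>?C. f v * one v = f v" unfolding f_def using bt_in_tg kap by metis
  have tproj: "t * one w = (if w \<in> ?C then f w else 0)" if "obj w" for w
    unfolding t_def using sum_proj[OF CC_obj fv that] .
  have y0C: "y0 \<in> ?C" using CC_self y0 .
  have "t * one y0 = f y0" using tproj y0 y0C by simp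
  also have "\<dots> = b * one (\<kappa> y0)" unfolding f_def using bfix ka y0C by blast
  also have "one (\<kappa> y0) = one y0" using kap(4,5)[OF y0C] unfolding full_def by simp
  finally have t0: "t * one y0 = b" using bS by simp
  have "t \<in> T" unfolding T_iff
  proof
    fix k assume k: "k \<in> H"
    have kM: "k \<in> M" using k HM by blast
    let ?v1 = "s k" let ?v2 = "tg k"
    have o1: "obj ?v1" and o2: "obj ?v2" using obj_s obj_t kM by auto
    have btk: "bt k t = bt k (t * one ?v1)" using bt_restr(2)[OF kM] by simp
    have tk: "t * one k = t * one ?v2 * one k"
    proof -
      have "one ?v2 * one k = one k" using one_tg[OF kM] by (simp add: mult.commute)
      then show ?thesis by (simp add: mult.assoc)
    qed
    show "bt k t = t * one k"
    proof (cases "?v1 \<in> ?C")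
      case True
      then have v2C: "?v2 \<in> ?C" using CC_closed[OF k y0] by blast
      note k1 = kap[OF True] and k2 = kap[OF v2C]
      let ?k1 = "\<kappa> ?v1" let ?k2 = "\<kappa> ?v2"
      have ik2: "full (iv ?k2)" "iv ?k2 \<in> M" "iv ?k2 \<in> H" "s (iv ?k2) = ?v2" "tg (iv ?k2) = y0"
        using full_iv k2 g1(9,10,11)[OF k2(2)] sgD(2)[OF sgH k2(1)] by auto
      have c1: "s k = tg ?k1" using k1 by simp
      have ck: "cp k ?k1 \<in> M" "cp k ?k1 \<in> H" "s (cp k ?k1) = y0" "tg (cp k ?k1) = ?v2"
        using g2[OF kM k1(2) c1] sgD(5)[OF sgH k k1(1) c1] k1 by auto
      have c2: "s (iv ?k2) = tg (cp k ?k1)" using ik2 ck by simp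
      let ?l = "cp (iv ?k2) (cp k ?k1)"
      have lH: "?l \<in> hom G H y0 y0"
        using sgD(5)[OF sgH ik2(3) ck(2) c2] g2[OF ik2(2) ck(1) c2] ck ik2 unfolding hom_def by auto
      have btl: "bt ?l a = bt (iv ?k2) (bt k (bt ?k1 a))" for a
        using bt_comp_lfull[OF ik2(1) ck(1) c2] bt_comp_rfull[OF kM k1(5) c1] by simp
      have inv2: "bt ?k2 (bt (iv ?k2) (bt k a)) = bt k a" for a
        using bt_inv_full[OF k2(5)] bt_in_tg[OF kM] k2 by simp
      have "bt k (f ?v1) = bt ?k2 (bt ?l b)" unfolding f_def using btl inv2 by simp
      also have "\<dots> = bt ?k2 (b * one ?l)" using bfix lH by simp
      also have "\<dots> = f ?v2 * bt ?k2 (one ?l)" unfolding f_def using bt_mult k2 by simp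
      also have "bt ?k2 (one ?l) = one k"
      proof -
        have lM: "?l \<in> M" using lH HM unfolding hom_def by auto
        have "bt ?k2 (one ?l) = bt ?k2 (bt ?l 1)" using bt_one[OF lM] by simp
        also have "\<dots> = bt k (bt ?k1 1)" using btl inv2 by simp
        also have "bt ?k1 1 = 1 * one (s k)" using bt_one k1 unfolding full_def by simp
        also have "bt k (1 * one (s k)) = one k" using bt_restr(2)[OF kM, of 1] bt_one[OF kM] by simp
        finally show ?thesis .
      qed
      finally have "bt k (f ?v1) = f ?v2 * one k" .
      then show ?thesis using btk tk tproj o1 o2 True v2C by simp
    next
      case False
      then have v2C: "?v2 \<notin> ?C" using CC_closed[OF k y0] by blast
      show ?thesis using btk tk tproj o1 o2 False v2C bt_zero[OF kM] by simp
    qed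
  qed
  then show ?thesis using t0 by blast
qed

lemma Ty_eq: assumes y: "obj y" shows "Ty y = By y"
proof
  show "Ty y \<subseteq> By y" using Ty_B[OF y] .
  show "By y \<subseteq> Ty y"
  proof
    fix b assume "b \<in> By y"
    then obtain t where "t \<in> T" "t * one y = b" using ext[OF y] by blast
    then show "b \<in> Ty y" unfolding restrict_obj_def by blast
  qed
qed

end


context pa begin
lemma conj_alg: assumes mM: "m \<in> M" and gM: "g \<in> M" and hM: "h \<in> M" and kM: "k \<in> M"
  and c1: "s m = tg g" and c2: "tg g = tg h" and c3: "s g = tg k" and c4: "s h = tg k"
  shows "cp (iv (cp (cp m g) k)) (cp (cp m h) k) = cp (iv k) (cp (cp (iv g) h) k)"
proof -
  have ig: "iv g \<in> M" "s (iv g) = tg g" "tg (iv g) = s g" using g1(9,10,11)[OF gM] by auto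
  have im: "iv m \<in> M" "s (iv m) = tg m" "tg (iv m) = s m" using g1(9,10,11)[OF mM] by auto
  have ik: "iv k \<in> M" "s (iv k) = tg k" "tg (iv k) = s k" using g1(9,10,11)[OF kM] by auto
  have mg: "cp m g \<in> M" "s (cp m g) = s g" "tg (cp m g) = tg m" using g2[OF mM gM c1] by auto
  have mh: "cp m h \<in> M" "s (cp m h) = s h" "tg (cp m h) = tg m" using g2[OF mM hM] c1 c2 by auto
  have mhk: "cp (cp m h) k \<in> M" "s (cp (cp m h) k) = s k" "tg (cp (cp m h) k) = tg m"
    using g2[OF mh(1) kM] mh c4 by auto
  have B: "cp (iv g) (iv m) \<in> M" "s (cp (iv g) (iv m)) = tg m" "tg (cp (iv g) (iv m)) = s g"
    using g2[OF ig(1) im(1)] ig im c1 by auto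
  have "iv (cp (cp m g) k) = cp (iv k) (iv (cp m g))" using iv_cp[OF mg(1) kM] mg c3 by simp
  also have "iv (cp m g) = cp (iv g) (iv m)" using iv_cp[OF mM gM c1] .
  finally have e1: "iv (cp (cp m g) k) = cp (iv k) (cp (iv g) (iv m))" .
  have "cp (cp (iv k) (cp (iv g) (iv m))) (cp (cp m h) k)
        = cp (iv k) (cp (cp (iv g) (iv m)) (cp (cp m h) k))"
    using assoc[OF ik(1) B(1) mhk(1)] ik B mhk c3 by simp
  also have "cp (cp (iv g) (iv m)) (cp (cp m h) k) = cp (iv g) (cp (iv m) (cp (cp m h) k))"
    using assoc[OF ig(1) im(1) mhk(1)] ig im mhk c1 by simp
  also have "cp (iv m) (cp (cp m h) k) = cp (cp (iv m) (cp m h)) k"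
    using assoc[OF im(1) mh(1) kM] im mh c4 by simp
  also have "cp (iv m) (cp m h) = cp (cp (iv m) m) h"
    using assoc[OF im(1) mM hM] im c1 c2 by simp
  also have "cp (iv m) m = tg h" using g1(13)[OF mM] c1 c2 by simp
  also have "cp (tg h) h = h" using g1(8)[OF hM] .
  also have "cp (iv g) (cp h k) = cp (cp (iv g) h) k"
    using assoc[OF ig(1) hM kM] ig c2 c4 by simp
  finally show ?thesis using e1 by simp
qed
end

context setting begin

definition P2 where "P2 \<longleftrightarrow> (\<forall>g\<in>Mor G. \<forall>h\<in>Mor G. tgt G g = tgt G h
                 \<and> cmp G (ginv G g) h \<notin> stab G one \<alpha> (Mor G) T \<longrightarrow>
                 (\<forall>e. nz_idem e \<and> e \<in> Sid (one g) \<union> Sid (one h) \<longrightarrow>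
                    (\<exists>t\<in>T. \<alpha> g (t * one (ginv G g)) * e \<noteq> \<alpha> h (t * one (ginv G h)) * e)))"

lemma P2_eq: "P2 \<longleftrightarrow> (\<forall>g\<in>M. \<forall>h\<in>M. tg g = tg h \<and> cp (iv g) h \<notin> stab G one \<alpha> M T \<longrightarrow>
                 (\<forall>e. nz_idem e \<and> e \<in> Sid (one g) \<union> Sid (one h) \<longrightarrow> (\<exists>t\<in>T. bt g t * e \<noteq> bt h t * e)))"
  unfolding P2_def bt_def ..

lemma alpha_strong_eq: "alpha_strong G one \<alpha> T \<longleftrightarrow> (\<forall>y z. obj y \<longrightarrow> obj z \<longrightarrow> strong_at G one \<alpha> (Ty y) y z)"
  unfolding alpha_strong_def objs_eq by blast

lemma ii_i: assumes P: P2 shows "alpha_strong G one \<alpha> T"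
  unfolding alpha_strong_eq
proof (intro allI impI)
  fix y z assume y: "obj y" and z: "obj z"
  show "strong_at G one \<alpha> (Ty y) y z" unfolding strong_at_eq
  proof (intro ballI impI allI)
    fix g h e assume g: "g \<in> hom G M y z" and h: "h \<in> hom G M y z"
      and n: "cp (iv g) h \<notin> stab G one \<alpha> (hom G M y y) (Ty y)"
      and e: "nz_idem e \<and> e \<in> Sid (one g) \<union> Sid (one h)"
    have gg: "g \<in> M" "s g = y" "tg g = z" and hh: "h \<in> M" "s h = y" "tg h = z"
      using g h unfolding hom_def by auto
    have "cp (iv g) h \<notin> stab G one \<alpha> M T" using n stab_iff[OF y loop_hom[OF g h]] by blast
    then have "tg g = tg h \<and> cp (iv g) h \<notin> stab G one \<alpha> M T" using gg hh by simp
    then have "\<forall>e. nz_idem e \<and> e \<in> Sid (one g) \<union> Sid (one h) \<longrightarrow> (\<exists>t\<in>T. bt g t * e \<noteq> bt h t * e)"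
      using bspec[OF bspec[OF P[unfolded P2_eq] gg(1)] hh(1)] by (rule rev_mp)
    then obtain t where t: "t \<in> T" "bt g t * e \<noteq> bt h t * e" using e by blast
    have "t * one y \<in> Ty y" using t unfolding restrict_obj_def by blast
    moreover have "bt g (t * one y) = bt g t" "bt h (t * one y) = bt h t"
      using bt_restr(2)[OF gg(1)] bt_restr(2)[OF hh(1)] gg hh by auto
    ultimately show "\<exists>b\<in>Ty y. bt g b * e \<noteq> bt h b * e" using t by metis
  qed
qed

lemma i_iii: assumes A: "alpha_strong G one \<alpha> T" shows "\<forall>y\<in>Y. strong_at G one \<alpha> (By y) y y"
proof
  fix y assume "y \<in> Y"
  then have y: "obj y" using Ysub objsH by blast
  show "strong_at G one \<alpha> (By y) y y" using A alpha_strong_eq y Ty_eq[OF y] by metis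
qed

end

context setting begin

lemma i_ii: assumes A: "alpha_strong G one \<alpha> T" shows P2
  unfolding P2_eq
proof (intro ballI impI allI)
  fix g h e assume gM: "g \<in> M" and hM: "h \<in> M"
    and c: "tg g = tg h \<and> cp (iv g) h \<notin> stab G one \<alpha> M T"
    and e: "nz_idem e \<and> e \<in> Sid (one g) \<union> Sid (one h)"
  have ee: "e * e = e" "e \<noteq> 0" using e unfolding nz_idem_def by auto
  have A': "strong_at G one \<alpha> (Ty y) y z" if "obj y" "obj z" for y z
    using A[unfolded alpha_strong_eq] that by blast
  let ?x = "s g" let ?w = "s h" let ?z = "tg g"
  have ox: "obj ?x" and ow: "obj ?w" and oz: "obj ?z" using obj_s obj_t gM hM by auto
  have "e \<in> Sid (one g) \<or> e \<in> Sid (one h)" using e by blast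
  then have eor: "e * one g = e \<or> e * one h = e" using mem1[OF gM, of e] mem1[OF hM, of e] by blast
  show "\<exists>t\<in>T. bt g t * e \<noteq> bt h t * e"
  proof (cases "hom G H ?x ?w = {}")
    case True
    have T2: "hom G H ?w ?x = {}" using hom_sym True by blast
    have xC: "?x \<in> CC ?x" "?w \<notin> CC ?x" using CC_self[OF ox] CC_iff[OF ow] True by auto
    have wC: "?w \<in> CC ?w" "?x \<notin> CC ?w" using CC_self[OF ow] CC_iff[OF ox] T2 by auto
    have ga: "bt g (\<Sum>v\<in>CC ?x. one v) = one g" using bt_sum_one[OF CC_obj gM] xC by simp
    have ha: "bt h (\<Sum>v\<in>CC ?x. one v) = 0" using bt_sum_one[OF CC_obj hM] xC by simp
    have gb: "bt g (\<Sum>v\<in>CC ?w. one v) = 0" using bt_sum_one[OF CC_obj gM] wC by simp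
    have hb: "bt h (\<Sum>v\<in>CC ?w. one v) = one h" using bt_sum_one[OF CC_obj hM] wC by simp
    from eor show ?thesis
    proof
      assume "e * one g = e"
      then have "bt g (\<Sum>v\<in>CC ?x. one v) * e \<noteq> bt h (\<Sum>v\<in>CC ?x. one v) * e"
        using ga ha ee by (simp add: mult.commute)
      then show ?thesis using oneC_T[OF ox] by blast
    next
      assume "e * one h = e"
      then have "bt g (\<Sum>v\<in>CC ?w. one v) * e \<noteq> bt h (\<Sum>v\<in>CC ?w. one v) * e"
        using gb hb ee by (simp add: mult.commute)
      then show ?thesis using oneC_T[OF ow] by blast
    qed
  next
    case False
    then have "hom G H ?w ?x \<noteq> {}" using hom_sym by blast
    then obtain k where k: "k \<in> hom G H ?w ?x" "full k"
      using get_full[OF gtH sgH objH[OF ow] ow] by blast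
    have kk: "k \<in> H" "k \<in> M" "s k = ?w" "tg k = ?x" using k HM unfolding hom_def by auto
    have ik: "full (iv k)" "iv k \<in> M" "iv k \<in> H" "s (iv k) = ?x" "tg (iv k) = ?w"
      using full_iv[OF k(2)] g1(9,10,11)[OF kk(2)] sgD(2)[OF sgH kk(1)] kk by auto
    have c1: "s h = tg (iv k)" using ik by simp
    let ?h' = "cp h (iv k)"
    have h': "?h' \<in> M" "s ?h' = ?x" "tg ?h' = ?z" using g2[OF hM ik(2) c1] ik c by auto
    have bth': "bt ?h' t = bt h t" if tT: "t \<in> T" for t
    proof -
      have "bt ?h' t = bt h (bt (iv k) t)" using bt_comp_rfull[OF hM ik(1) c1] .
      also have "bt (iv k) t = t * one (iv k)" using tT T_iff ik(3) by blast
      also have "one (iv k) = one ?w" using ik(1,5) unfolding full_def by simp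
      also have "bt h (t * one ?w) = bt h t" using bt_restr(2)[OF hM] .
      finally show ?thesis .
    qed
    have oh': "one ?h' = one h" using bth'[OF one_T] bt_one hM h'(1) by simp
    let ?l = "cp (iv g) h" let ?l' = "cp (iv g) ?h'"
    have ig: "iv g \<in> M" "s (iv g) = ?z" "tg (iv g) = ?x" using g1(9,10,11)[OF gM] by auto
    have c2: "s (iv g) = tg h" using ig c by simp
    have c3: "s (iv g) = tg ?h'" using ig h' by simp
    have lM: "?l \<in> M" "s ?l = ?w" "tg ?l = ?x" using g2[OF ig(1) hM c2] ig by auto
    have l'hom: "?l' \<in> hom G M ?x ?x" using g2[OF ig(1) h'(1) c3] ig h' unfolding hom_def by auto
    have l'M: "?l' \<in> M" "s ?l' = ?x" using l'hom unfolding hom_def by auto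
    have l'eq: "?l' = cp ?l (iv k)" using assoc[OF ig(1) hM ik(2) c2 c1] by simp
    have c4: "s ?l' = tg k" using l'M kk by simp
    have l_eq: "cp ?l' k = ?l"
    proof -
      have "cp ?l' k = cp (cp ?l (iv k)) k" using l'eq by simp
      also have "\<dots> = cp ?l (cp (iv k) k)" using assoc[OF lM(1) ik(2) kk(2)] lM ik kk by simp
      also have "cp (iv k) k = ?w" using g1(13)[OF kk(2)] kk by simp
      also have "cp ?l ?w = ?l" using g1(7)[OF lM(1)] lM by simp
      finally show ?thesis .
    qed
    have "?l' \<notin> stab G one \<alpha> M T"
    proof
      assume st: "?l' \<in> stab G one \<alpha> M T"
      have btl: "bt ?l t = bt ?l' (bt k t)" for t using bt_comp_rfull[OF l'M(1) k(2) c4] l_eq by simp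
      have ok: "one k = one ?x" using k(2) kk unfolding full_def by simp
      have "bt ?l t = t * one ?l" if tT: "t \<in> T" for t
      proof -
        have "bt k t = t * one k" using tT T_iff kk by blast
        then have "bt ?l t = bt ?l' (t * one ?x)" using btl ok by simp
        also have "\<dots> = bt ?l' t" using bt_restr(2)[OF l'M(1)] l'M by simp
        also have "\<dots> = t * one ?l'" using st tT stab_eq by blast
        also have "one ?l' = one ?l"
        proof -
          have "one ?l = bt ?l 1" using bt_one lM by simp
          also have "\<dots> = bt ?l' (1 * one ?x)" using btl bt_one[OF kk(2)] ok by simp
          also have "\<dots> = bt ?l' 1" using bt_restr(2)[OF l'M(1), of 1] l'M by simp
          finally show ?thesis using bt_one[OF l'M(1)] by simp
        qed
        finally show ?thesis .
      qed
      then have "?l \<in> stab G one \<alpha> M T" using stab_eq lM by blast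
      then show False using c by blast
    qed
    then have n: "?l' \<notin> stab G one \<alpha> (hom G M ?x ?x) (Ty ?x)" using stab_iff[OF ox l'hom] by blast
    have gh: "g \<in> hom G M ?x ?z" "?h' \<in> hom G M ?x ?z" using gM h' unfolding hom_def by auto
    have e': "nz_idem e \<and> e \<in> Sid (one g) \<union> Sid (one ?h')" using e oh' by simp
    have "\<forall>e. nz_idem e \<and> e \<in> Sid (one g) \<union> Sid (one ?h') \<longrightarrow> (\<exists>b\<in>Ty ?x. bt g b * e \<noteq> bt ?h' b * e)"
      using bspec[OF bspec[OF A'[OF ox oz, unfolded strong_at_eq] gh(1)] gh(2)] n by (rule mp)
    then obtain b where b: "b \<in> Ty ?x" "bt g b * e \<noteq> bt ?h' b * e" using e' by blast
    obtain t where t: "t \<in> T" "b = t * one ?x" using b unfolding restrict_obj_def by blast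
    have "bt g b = bt g t" using t bt_restr(2)[OF gM] by simp
    moreover have "bt ?h' b = bt h t" using t bt_restr(2)[OF h'(1)] h' bth' by simp
    ultimately show ?thesis using b t by auto
  qed
qed

end

context setting begin

lemma iii_i: assumes C3: "\<forall>y\<in>Y. strong_at G one \<alpha> (By y) y y" shows "alpha_strong G one \<alpha> T"
  unfolding alpha_strong_eq
proof (intro allI impI)
  fix y z assume y: "obj y" and z: "obj z"
  show "strong_at G one \<alpha> (Ty y) y z" unfolding strong_at_eq
  proof (intro ballI impI allI)
    fix g h e assume g: "g \<in> hom G M y z" and h: "h \<in> hom G M y z"
      and n: "cp (iv g) h \<notin> stab G one \<alpha> (hom G M y y) (Ty y)"
      and e: "nz_idem e \<and> e \<in> Sid (one g) \<union> Sid (one h)"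
    have gg: "g \<in> M" "s g = y" "tg g = z" and hh: "h \<in> M" "s h = y" "tg h = z"
      using g h unfolding hom_def by auto
    have ee: "e * e = e" "e \<noteq> 0" using e unfolding nz_idem_def by auto
    have yH: "y \<in> objs G H" using objsH y by simp
    obtain yj where yj: "yj \<in> Y" "yj \<in> CC y" using Yu yH by blast
    have oyj: "obj yj" using yj Ysub objsH by blast
    have "hom G H y yj \<noteq> {}" using CC_iff[OF oyj] yj by blast
    then have "hom G H yj y \<noteq> {}" using hom_sym by blast
    then obtain k where k: "k \<in> hom G H yj y" "full k"
      using get_full[OF gtH sgH objH[OF oyj] oyj] by blast
    have kk: "k \<in> H" "k \<in> M" "s k = yj" "tg k = y" using k HM unfolding hom_def by auto
    have "hom G M z yj \<noteq> {}" using conn z oyj objs_eq unfolding connected_groupoid_def by blast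
    then obtain m where m: "m \<in> hom G M z yj" "full m"
      using get_full[OF gtG subgroupoid_M obj_props(1)[OF z] z] by blast
    have mm: "m \<in> M" "s m = z" "tg m = yj" using m unfolding hom_def by auto
    have cmg: "s m = tg g" and cmh: "s m = tg h" using mm gg hh by auto
    have mg: "cp m g \<in> M" "s (cp m g) = y" "tg (cp m g) = yj" using g2[OF mm(1) gg(1) cmg] gg mm by auto
    have mh: "cp m h \<in> M" "s (cp m h) = y" "tg (cp m h) = yj" using g2[OF mm(1) hh(1) cmh] hh mm by auto
    have cgk: "s (cp m g) = tg k" and chk: "s (cp m h) = tg k" using mg mh kk by auto
    let ?g2 = "cp (cp m g) k" let ?h2 = "cp (cp m h) k"
    have g2h: "?g2 \<in> hom G M yj yj" using g2[OF mg(1) kk(2) cgk] mg kk unfolding hom_def by auto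
    have h2h: "?h2 \<in> hom G M yj yj" using g2[OF mh(1) kk(2) chk] mh kk unfolding hom_def by auto
    have g2M: "?g2 \<in> M" and h2M: "?h2 \<in> M" using g2h h2h unfolding hom_def by auto
    have btg2: "bt ?g2 a = bt m (bt g (bt k a))" for a
      using bt_comp_rfull[OF mg(1) k(2) cgk] bt_comp_lfull[OF m(2) gg(1) cmg] by simp
    have bth2: "bt ?h2 a = bt m (bt h (bt k a))" for a
      using bt_comp_rfull[OF mh(1) k(2) chk] bt_comp_lfull[OF m(2) hh(1) cmh] by simp
    let ?l = "cp (iv g) h"
    have lhom: "?l \<in> hom G M y y" using loop_hom[OF g h] .
    have lM: "?l \<in> M" "s ?l = y" "tg ?l = y" using lhom unfolding hom_def by auto
    have Leq: "cp (iv ?g2) ?h2 = cp (iv k) (cp ?l k)"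
      using conj_alg[OF mm(1) gg(1) hh(1) kk(2)] cmg gg hh kk by simp
    have ik: "full (iv k)" "iv k \<in> M" "s (iv k) = y" "tg (iv k) = yj"
      using full_iv[OF k(2)] g1(9,10,11)[OF kk(2)] kk by auto
    have clk: "s ?l = tg k" using lM kk by simp
    have lk: "cp ?l k \<in> M" "s (cp ?l k) = yj" "tg (cp ?l k) = y" using g2[OF lM(1) kk(2) clk] lM kk by auto
    have c5: "s (iv k) = tg (cp ?l k)" using ik lk by simp
    have btL: "bt (cp (iv k) (cp ?l k)) a = bt (iv k) (bt ?l (bt k a))" for a
      using bt_comp_lfull[OF ik(1) lk(1) c5] bt_comp_rfull[OF lM(1) k(2) clk] by simp
    have invk: "bt k (bt (iv k) (bt ?l a)) = bt ?l a" for a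
      using bt_inv_full[OF k(2)] bt_in_tg[OF lM(1)] lM kk by simp
    have okk: "one k = one y" using k(2) kk unfolding full_def by simp
    have btkT: "bt k (t * one yj) = t * one y" if tT: "t \<in> T" for t
    proof -
      have "bt k (t * one yj) = bt k t" using bt_restr(2)[OF kk(2), of t] kk by simp
      also have "\<dots> = t * one k" using tT T_iff kk by blast
      finally show ?thesis using okk by simp
    qed
    have nL: "cp (iv ?g2) ?h2 \<notin> stab G one \<alpha> (hom G M yj yj) (By yj)"
    proof
      assume st0: "cp (iv ?g2) ?h2 \<in> stab G one \<alpha> (hom G M yj yj) (By yj)"
      let ?L = "cp (iv k) (cp ?l k)"
      have st: "?L \<in> stab G one \<alpha> (hom G M yj yj) (By yj)" using st0 Leq by simp
      have st': "bt ?L b = b * one ?L" if "b \<in> By yj" for b using st that stab_eq by blast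
      have LM: "?L \<in> M" using g2[OF ik(2) lk(1) c5] by blast
      have oneL: "bt k (one ?L) = one ?l"
      proof -
        have "one ?L = bt ?L 1" using bt_one[OF LM] by simp
        then have "bt k (one ?L) = bt ?l (bt k 1)" using btL invk by simp
        also have "bt k 1 = 1 * one (s ?l)" using bt_one[OF kk(2)] okk lM by simp
        also have "bt ?l (1 * one (s ?l)) = one ?l" using bt_restr(2)[OF lM(1), of 1] bt_one[OF lM(1)] by simp
        finally show ?thesis .
      qed
      have "bt ?l b' = b' * one ?l" if b': "b' \<in> Ty y" for b'
      proof -
        obtain t where t: "t \<in> T" "b' = t * one y" using b' unfolding restrict_obj_def by blast
        have bB: "t * one yj \<in> By yj" using Ty_B[OF oyj] t unfolding restrict_obj_def by blast
        have r: "bt ?l (t * one y) = bt ?l t" using bt_restr(2)[OF lM(1)] lM by simp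
        have "bt ?L (t * one yj) = bt (iv k) (bt ?l (t * one y))" using btL btkT t by simp
        then have "bt (iv k) (bt ?l t) = t * one yj * one ?L" using st'[OF bB] r by simp
        then have "bt k (bt (iv k) (bt ?l t)) = bt k (t * one yj * one ?L)" by simp
        then have "bt ?l t = bt k (t * one yj) * bt k (one ?L)" using invk bt_mult[OF kk(2)] by simp
        then have "bt ?l t = t * one y * one ?l" using btkT t oneL by simp
        then show ?thesis using t r by simp
      qed
      then have "?l \<in> stab G one \<alpha> (hom G M y y) (Ty y)" using stab_eq lhom by blast
      then show False using n by blast
    qed
    let ?e = "bt m e"
    have "e \<in> Sid (one g) \<or> e \<in> Sid (one h)" using e by blast
    then have eor: "e * one g = e \<or> e * one h = e" using mem1[OF gg(1), of e] mem1[OF hh(1), of e] by blast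
    have eS: "e * one z = e"
    proof -
      have og: "one g * one z = one g" using one_tg[OF gg(1)] gg by simp
      have oh: "one h * one z = one h" using one_tg[OF hh(1)] hh by simp
      from eor show ?thesis
      proof
        assume a: "e * one g = e"
        have "e * one z = e * one g * one z" using a by simp
        also have "\<dots> = e * one g" using og by (simp add: mult.assoc)
        finally show ?thesis using a by simp
      next
        assume a: "e * one h = e"
        have "e * one z = e * one h * one z" using a by simp
        also have "\<dots> = e * one h" using oh by (simp add: mult.assoc)
        finally show ?thesis using a by simp
      qed
    qed
    have e2: "nz_idem ?e"
    proof -
      have "?e * ?e = ?e" using bt_mult[OF mm(1), of e e] ee by simp
      moreover have "?e \<noteq> 0"
      proof
        assume a: "?e = 0"
        have "bt (iv m) ?e = e * one (iv m)" using bt_inv[OF mm(1)] .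
        moreover have "bt (iv m) ?e = 0" using a bt_zero[OF g1(9)[OF mm(1)]] by simp
        moreover have "one (iv m) = one z" using m(2) mm unfolding full_def by simp
        ultimately show False using eS ee by simp
      qed
      ultimately show ?thesis unfolding nz_idem_def by simp
    qed
    have og2: "one ?g2 = bt m (one g)"
    proof -
      have "one ?g2 = bt ?g2 1" using bt_one[OF g2M] by simp
      also have "\<dots> = bt m (bt g (bt k 1))" using btg2 .
      also have "bt k 1 = 1 * one (s g)" using bt_one[OF kk(2)] okk gg by simp
      also have "bt g (1 * one (s g)) = one g" using bt_restr(2)[OF gg(1), of 1] bt_one[OF gg(1)] by simp
      finally show ?thesis .
    qed
    have oh2: "one ?h2 = bt m (one h)"
    proof -
      have "one ?h2 = bt ?h2 1" using bt_one[OF h2M] by simp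
      also have "\<dots> = bt m (bt h (bt k 1))" using bth2 .
      also have "bt k 1 = 1 * one (s h)" using bt_one[OF kk(2)] okk hh by simp
      also have "bt h (1 * one (s h)) = one h" using bt_restr(2)[OF hh(1), of 1] bt_one[OF hh(1)] by simp
      finally show ?thesis .
    qed
    have e3: "?e \<in> Sid (one ?g2) \<union> Sid (one ?h2)"
    proof -
      from eor show ?thesis
      proof
        assume "e * one g = e"
        then have "?e * one ?g2 = ?e" using og2 bt_mult[OF mm(1), of e "one g"] by simp
        then show ?thesis using Sid_intro[of ?e "one ?g2"] by simp
      next
        assume "e * one h = e"
        then have "?e * one ?h2 = ?e" using oh2 bt_mult[OF mm(1), of e "one h"] by simp
        then show ?thesis using Sid_intro[of ?e "one ?h2"] by simp
      qed
    qed
    have S3: "strong_at G one \<alpha> (By yj) yj yj" using C3 yj(1) by blast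
    have "\<forall>e. nz_idem e \<and> e \<in> Sid (one ?g2) \<union> Sid (one ?h2) \<longrightarrow> (\<exists>b\<in>By yj. bt ?g2 b * e \<noteq> bt ?h2 b * e)"
      using bspec[OF bspec[OF S3[unfolded strong_at_eq] g2h] h2h] nL by (rule mp)
    then obtain b where b: "b \<in> By yj" "bt ?g2 b * ?e \<noteq> bt ?h2 b * ?e" using e2 e3 by blast
    obtain t where t: "t \<in> T" "t * one yj = b" using ext[OF oyj b(1)] by blast
    have rg: "bt g (t * one y) = bt g t" using bt_restr(2)[OF gg(1)] gg by simp
    have rh: "bt h (t * one y) = bt h t" using bt_restr(2)[OF hh(1)] hh by simp
    have "bt ?g2 b = bt m (bt g t)" using btg2 t btkT rg by metis
    moreover have "bt ?h2 b = bt m (bt h t)" using bth2 t btkT rh by metis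
    ultimately have "bt m (bt g t * e) \<noteq> bt m (bt h t * e)" using b bt_mult[OF mm(1)] by simp
    then have "bt g t * e \<noteq> bt h t * e" by auto
    moreover have "t * one y \<in> Ty y" using t unfolding restrict_obj_def by blast
    ultimately show "\<exists>b\<in>Ty y. bt g b * e \<noteq> bt h b * e" using rg rh by metis
  qed
qed

end

theorem proposition5p4:
  fixes G :: "'g groupoid"
    and one :: "'g \<Rightarrow> 'r::comm_ring_1"
    and \<alpha> :: "'g \<Rightarrow> 'r \<Rightarrow> 'r"
    and H :: "'g set"
    and Y :: "'g set"
  assumes "is_groupoid G"
    and "finite (Mor G)"
    and "connected_groupoid G"
    and "unital_partial_action G one \<alpha>"
    and "internal_direct_sum G one"
    and "\<forall>g\<in>Mor G. one g \<noteq> 0"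
    and "group_type G one (Mor G)"
    and "H \<in> wSub G one"
    and "Y \<subseteq> objs G H"
    and "\<forall>x\<in>objs G H. \<exists>!y. y \<in> Y \<and> y \<in> component_objs G H x"
  defines "T \<equiv> fixed G one \<alpha> H UNIV"
  shows "(alpha_strong G one \<alpha> T
          \<longleftrightarrow> (\<forall>g\<in>Mor G. \<forall>h\<in>Mor G. tgt G g = tgt G h
                 \<and> cmp G (ginv G g) h \<notin> stab G one \<alpha> (Mor G) T \<longrightarrow>
                 (\<forall>e. nz_idem e \<and> e \<in> Sid (one g) \<union> Sid (one h) \<longrightarrow>
                    (\<exists>t\<in>T. \<alpha> g (t * one (ginv G g)) * e \<noteq> \<alpha> h (t * one (ginv G h)) * e))))
       \<and> (alpha_strong G one \<alpha> T
          \<longleftrightarrow> (\<forall>y\<in>Y. strong_at G one \<alpha> (fixed G one \<alpha> (hom G H y y) (Sid (one y))) y y))"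
proof -
  have S: "setting G one \<alpha> H Y"
    unfolding setting_def setting_axioms_def pa2_def pa2_axioms_def pa_def using assms by blast
  interpret S: setting G one \<alpha> H Y by (rule S)
  have TT: "T = S.T" unfolding T_def S.T_def ..
  show ?thesis unfolding TT using S.i_ii S.ii_i S.i_iii S.iii_i unfolding S.P2_def by blast
qed

end
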